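(* Let $k\ge3$, $\ell\ge2$ and let $G=\mathrm{Sym}(k)\wr\mathrm{Sym}(\ell)$ act in product action on $[k]^\ell$, where $[k]=\{1,\dots,k\}$. Then $G$ contains quasi-semiregular elements. Moreover, if $g\in G$ is a quasi-semiregular element of prime order, then $g$ lies in the base group, $g=(h_1,\dots,h_\ell)\in\mathrm{Sym}(k)^\ell$, and each $h_i$ is a quasi-semiregular permutation of $[k]$.
   Context: Product action: $(h_1,\dots,h_\ell)\in\mathrm{Sym}(k)^\ell$ maps $(\alpha_1,\dots,\alpha_\ell)\mapsto(\alpha_1^{h_1},\dots,\alpha_\ell^{h_\ell})$ and $\sigma\in\mathrm{Sym}(\ell)$ maps $(\alpha_1,\dots,\alpha_\ell)\mapsto(\alpha_{1\sigma^{-1}},\dots,\alpha_{\ell\sigma^{-1}})$. A permutation $g$ is quasi-semiregular if $\langle g\rangle$ has a unique fixed point and acts semiregularly (only the identity fixes a point) on the remaining points. *)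

theory Defs
  imports "HOL-Combinatorics.Permutations" "HOL-Computational_Algebra.Primes"
begin

text \<open>Points of [k]^l, with [k] = {1..k}; coordinates indexed by positions 0..<l of a list.\<close>
definition points :: "nat \<Rightarrow> nat \<Rightarrow> nat list set" where
  "points k l = {xs. length xs = l \<and> set xs \<subseteq> {1..k}}"

definition wr_act :: "(nat \<Rightarrow> nat \<Rightarrow> nat) \<Rightarrow> (nat \<Rightarrow> nat) \<Rightarrow> nat list \<Rightarrow> nat list" where
  "wr_act h \<sigma> xs = map (\<lambda>j. h (inv \<sigma> j) (xs ! inv \<sigma> j)) [0..<length xs]"

definition wreath_prod :: "nat \<Rightarrow> nat \<Rightarrow> (nat list \<Rightarrow> nat list) set" where
  "wreath_prod k l = {wr_act h \<sigma> | h \<sigma>.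
      (\<forall>i<l. h i permutes {1..k}) \<and> \<sigma> permutes {0..<l}}"

definition in_base_group :: "nat \<Rightarrow> nat \<Rightarrow> (nat list \<Rightarrow> nat list) \<Rightarrow> (nat \<Rightarrow> nat \<Rightarrow> nat) \<Rightarrow> bool" where
  "in_base_group k l g h \<longleftrightarrow> (\<forall>i<l. h i permutes {1..k}) \<and>
      (\<forall>xs\<in>points k l. g xs = wr_act h id xs)"

text \<open>Quasi-semiregular permutation g of a set S: the cyclic group <g> has a unique
  fixed point and acts semiregularly on the remaining points.\<close>
definition quasi_semiregular :: "'a set \<Rightarrow> ('a \<Rightarrow> 'a) \<Rightarrow> bool" where
  "quasi_semiregular S g \<longleftrightarrow>
     (\<exists>!x. x \<in> S \<and> (\<forall>n. (g ^^ n) x = x)) \<and>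
     (\<forall>y\<in>S. \<forall>n. (g ^^ n) y = y \<longrightarrow>
         (\<forall>x\<in>S. (g ^^ n) x = x) \<or> (\<forall>m. (g ^^ m) y = y))"

definition perm_order :: "'a set \<Rightarrow> ('a \<Rightarrow> 'a) \<Rightarrow> nat" where
  "perm_order S g = (LEAST n. 0 < n \<and> (\<forall>x\<in>S. (g ^^ n) x = x))"

end

theory Submission
  imports Defs "HOL-Combinatorics.Cycles"
begin

fun Fc :: "(nat \<Rightarrow> nat \<Rightarrow> nat) \<Rightarrow> (nat \<Rightarrow> nat) \<Rightarrow> nat \<Rightarrow> nat \<Rightarrow> nat \<Rightarrow> nat" where
  "Fc h s i 0 = id"
| "Fc h s i (Suc n) = h ((s ^^ n) i) \<circ> Fc h s i n"

lemma Fc_id: "Fc h id i n = h i ^^ n"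
  by (induct n) (auto simp: id_funpow[unfolded id_def])

lemma fix_funpow: "f x = x \<Longrightarrow> (f ^^ n) x = x"
  by (induct n) auto

lemma fix_mult: "(f ^^ d) x = x \<Longrightarrow> (f ^^ (d * q)) x = x"
  by (metis fix_funpow funpow_mult)

lemma fix_add_mult: "(f ^^ d) x = x \<Longrightarrow> (f ^^ (r + d * q)) x = (f ^^ r) x"
  by (simp add: funpow_add fix_mult)

lemma bez_fix:
  assumes "prime p" "(f ^^ p) x = x" "(f ^^ n) x = x" "\<not> p dvd n"
  shows "f x = x"
proof -
  have n0: "n \<noteq> 0" using assms(4) by (metis dvd_0_right)
  have "coprime n p" using assms(1,4) by (metis prime_imp_coprime_nat coprime_commute)
  then have "gcd n p = 1" by simp
  then obtain a b where ab: "n * a = p * b + 1" using bezout_nat[OF n0, of p] by auto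
  have "(f ^^ (n * a)) x = x" using fix_mult[OF assms(3)] .
  moreover have "(f ^^ (1 + p * b)) x = (f ^^ 1) x" using fix_add_mult[OF assms(2)] .
  ultimately show ?thesis using ab by simp
qed

lemma mod_dvd_aux: "(a::nat) < m \<Longrightarrow> (a + n) mod m = a \<Longrightarrow> m dvd n"
  by (metis add_diff_cancel_left' mod_add_self2 mod_eq_dvd_iff_nat mod_less le_add1)

lemma qsr_unique:
  assumes "quasi_semiregular S g" "prime (perm_order S g)" "x0 \<in> S" "\<forall>n. (g ^^ n) x0 = x0"
    "y \<in> S" "g y = y"
  shows "y = x0"
proof -
  from assms(1) have A: "\<exists>!x. x \<in> S \<and> (\<forall>n. (g ^^ n) x = x)"
    and B: "\<forall>y\<in>S. \<forall>n. (g ^^ n) y = y \<longrightarrow> (\<forall>x\<in>S. (g ^^ n) x = x) \<or> (\<forall>m. (g ^^ m) y = y)"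
    unfolding quasi_semiregular_def by auto
  have "(g ^^ 1) y = y" using assms(6) by simp
  then have "(\<forall>x\<in>S. (g ^^ 1) x = x) \<or> (\<forall>m. (g ^^ m) y = y)" using B assms(5) by blast
  moreover have "\<not> (\<forall>x\<in>S. (g ^^ 1) x = x)"
  proof
    assume "\<forall>x\<in>S. (g ^^ 1) x = x"
    then have "perm_order S g = 1" unfolding perm_order_def by (intro Least_equality) auto
    then show False using assms(2) by simp
  qed
  ultimately have "\<forall>m. (g ^^ m) y = y" by blast
  then show ?thesis using A assms(3,4,5) by blast
qed

lemma perm_order_prop:
  assumes "\<exists>n>0. \<forall>x\<in>S. (g ^^ n) x = x"
  shows "perm_order S g > 0 \<and> (\<forall>x\<in>S. (g ^^ perm_order S g) x = x)"
  unfolding perm_order_def using LeastI_ex[of "\<lambda>n. 0 < n \<and> (\<forall>x\<in>S. (g ^^ n) x = x)"] assms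
  by blast

lemma points_fin: "finite (points k l)"
  unfolding points_def using finite_lists_length_eq[of "{1..k}" l] by (simp add: conj_commute)

context
  fixes k l :: nat and h :: "nat \<Rightarrow> nat \<Rightarrow> nat" and \<sigma> :: "nat \<Rightarrow> nat"
  assumes hp: "\<And>i. i < l \<Longrightarrow> h i permutes {1..k}" and sp: "\<sigma> permutes {0..<l}"
begin

lemma sig_lt: "m < l \<Longrightarrow> \<sigma> m < l"
  using permutes_in_image[OF sp] by auto

lemma sigpow_lt: "m < l \<Longrightarrow> (\<sigma> ^^ n) m < l"
  using permutes_in_image[OF permutes_funpow[OF sp]] by auto

lemma inv_lt: "j < l \<Longrightarrow> inv \<sigma> j < l"
  using permutes_in_image[OF permutes_inv[OF sp]] by auto

lemma h_in: "i < l \<Longrightarrow> b \<in> {1..k} \<Longrightarrow> h i b \<in> {1..k}"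
  using permutes_in_image[OF hp] by blast

lemma wr_points:
  assumes a: "xs \<in> points k l"
  shows "wr_act h \<sigma> xs \<in> points k l"
proof -
  have len: "length xs = l" and s: "set xs \<subseteq> {1..k}" using a by (auto simp: points_def)
  have "h (inv \<sigma> j) (xs ! inv \<sigma> j) \<in> {1..k}" if "j < l" for j
  proof -
    have "xs ! inv \<sigma> j \<in> set xs" using nth_mem[of "inv \<sigma> j" xs] inv_lt[OF that] len by simp
    then have "xs ! inv \<sigma> j \<in> {1..k}" using s by blast
    then show ?thesis using h_in[OF inv_lt[OF that]] by blast
  qed
  then show ?thesis using len by (auto simp: points_def wr_act_def)
qed

lemma wr_pow_points: "xs \<in> points k l \<Longrightarrow> (wr_act h \<sigma> ^^ n) xs \<in> points k l"
  by (induct n) (auto simp: wr_points)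

lemma wr_nth_sig:
  assumes "xs \<in> points k l" "m < l"
  shows "wr_act h \<sigma> xs ! (\<sigma> m) = h m (xs ! m)"
  using assms sig_lt[OF assms(2)]
  by (simp add: points_def wr_act_def permutes_inverses(2)[OF sp])

lemma wr_fix:
  assumes a: "xs \<in> points k l" and f: "\<And>m. m < l \<Longrightarrow> xs ! (\<sigma> m) = h m (xs ! m)"
  shows "wr_act h \<sigma> xs = xs"
proof -
  have len: "length xs = l" using a by (simp add: points_def)
  show ?thesis
  proof (rule nth_equalityI)
    show "length (wr_act h \<sigma> xs) = length xs" by (simp add: wr_act_def)
    fix j assume "j < length (wr_act h \<sigma> xs)"
    then have j: "j < l" using len by (simp add: wr_act_def)
    have "xs ! j = xs ! (\<sigma> (inv \<sigma> j))" using permutes_inverses(1)[OF sp] by simp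
    also have "\<dots> = h (inv \<sigma> j) (xs ! inv \<sigma> j)" using f[OF inv_lt[OF j]] .
    finally show "wr_act h \<sigma> xs ! j = xs ! j" using j len by (simp add: wr_act_def)
  qed
qed

lemma wr_fixD:
  assumes "xs \<in> points k l" "wr_act h \<sigma> xs = xs" "m < l"
  shows "xs ! (\<sigma> m) = h m (xs ! m)"
  using wr_nth_sig[OF assms(1) assms(3)] assms(2) by simp

lemma wr_pow_nth:
  assumes "xs \<in> points k l" "i < l"
  shows "(wr_act h \<sigma> ^^ n) xs ! ((\<sigma> ^^ n) i) = Fc h \<sigma> i n (xs ! i)"
proof (induct n)
  case 0 show ?case by simp
next
  case (Suc n)
  have "(wr_act h \<sigma> ^^ Suc n) xs ! ((\<sigma> ^^ Suc n) i)
      = wr_act h \<sigma> ((wr_act h \<sigma> ^^ n) xs) ! (\<sigma> ((\<sigma> ^^ n) i))" by simp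
  also have "\<dots> = h ((\<sigma> ^^ n) i) ((wr_act h \<sigma> ^^ n) xs ! ((\<sigma> ^^ n) i))"
    using wr_nth_sig[OF wr_pow_points[OF assms(1)] sigpow_lt[OF assms(2)]] .
  also have "\<dots> = Fc h \<sigma> i (Suc n) (xs ! i)" using Suc by simp
  finally show ?case .
qed

lemma Fc_in:
  assumes "i < l" "b \<in> {1..k}" shows "Fc h \<sigma> i n b \<in> {1..k}"
proof (induct n)
  case 0 show ?case using assms by simp
next
  case (Suc n)
  have "(\<sigma> ^^ n) i < l" by (rule sigpow_lt[OF assms(1)])
  from h_in[OF this Suc] show ?case by simp
qed

lemma Fc_add:
  assumes "(\<sigma> ^^ p) i = i"
  shows "Fc h \<sigma> i (p + n) = Fc h \<sigma> i n \<circ> Fc h \<sigma> i p"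
proof (induct n)
  case 0 show ?case by simp
next
  case (Suc n)
  have "(\<sigma> ^^ (n + p)) i = (\<sigma> ^^ n) ((\<sigma> ^^ p) i)" by (simp add: funpow_add)
  then have e: "(\<sigma> ^^ (p + n)) i = (\<sigma> ^^ n) i" using assms by (simp add: add.commute)
  show ?case using Suc e by (simp add: o_assoc)
qed

lemma Fc_mod:
  assumes "(\<sigma> ^^ p) i = i" "\<forall>b\<in>{1..k}. Fc h \<sigma> i p b = b" "a \<in> {1..k}"
  shows "Fc h \<sigma> i (r + p * q) a = Fc h \<sigma> i r a"
proof (induct q)
  case 0 show ?case by simp
next
  case (Suc q)
  have "r + p * Suc q = p + (r + p * q)" by simp
  then have "Fc h \<sigma> i (r + p * Suc q) = Fc h \<sigma> i (p + (r + p * q))" by (rule arg_cong)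
  then have "Fc h \<sigma> i (r + p * Suc q) a = Fc h \<sigma> i (r + p * q) (Fc h \<sigma> i p a)"
    using Fc_add[OF assms(1), of "r + p * q"] by simp
  also have "\<dots> = Fc h \<sigma> i r a" using assms(2,3) Suc by simp
  finally show ?case .
qed

lemma orbit_inj:
  assumes "prime p" "(\<sigma> ^^ p) i = i" "\<sigma> i \<noteq> i" "s < p" "s' < p" "(\<sigma> ^^ s) i = (\<sigma> ^^ s') i"
  shows "s = s'"
proof (rule ccontr)
  assume ne: "s \<noteq> s'"
  have inj: "inj \<sigma>" using sp permutes_inj by blast
  have *: False if uv: "u < v" "v < p" "(\<sigma> ^^ u) i = (\<sigma> ^^ v) i" for u v
  proof -
    have "(\<sigma> ^^ (v - u)) i = i" using funpow_diff[OF inj, of u v i] uv by simp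
    moreover have "\<not> p dvd (v - u)" using uv by (auto dest: dvd_imp_le)
    ultimately have "\<sigma> i = i" using bez_fix[OF assms(1) assms(2)] by blast
    then show False using assms(3) by simp
  qed
  show False
  proof (cases "s < s'")
    case True then show False using *[of s s'] assms(5,6) by simp
  next
    case False then have "s' < s" using ne by simp
    then show False using *[of s' s] assms(4,6) by simp
  qed
qed

lemma second_fix:
  assumes "prime p" "i < l" "(\<sigma> ^^ p) i = i" "\<forall>b\<in>{1..k}. Fc h \<sigma> i p b = b" "\<sigma> i \<noteq> i"
    "x0 \<in> points k l" "wr_act h \<sigma> x0 = x0" "a \<in> {1..k}" "a \<noteq> x0 ! i"
  shows "\<exists>y \<in> points k l. wr_act h \<sigma> y = y \<and> y \<noteq> x0"
proof -
  define Orb where "Orb = {j. \<exists>t. (\<sigma> ^^ t) i = j}"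
  define T where "T j = (LEAST t. (\<sigma> ^^ t) i = j)" for j
  define y where "y = map (\<lambda>j. if j \<in> Orb then Fc h \<sigma> i (T j) a else x0 ! j) [0..<l]"
  have p0: "p > 0" using assms(1) prime_gt_0_nat by blast
  have V: "Fc h \<sigma> i s a = Fc h \<sigma> i (T j) a" if "(\<sigma> ^^ s) i = j" for s j
  proof -
    let ?r = "s mod p"
    have e: "?r + p * (s div p) = s" by simp
    have sr: "(\<sigma> ^^ ?r) i = j"
      using fix_add_mult[OF assms(3), of ?r "s div p"] that unfolding e by simp
    have Tj: "(\<sigma> ^^ T j) i = j" unfolding T_def using sr by (rule LeastI)
    have Tle: "T j \<le> ?r" unfolding T_def using sr by (rule Least_le)
    have rp: "?r < p" using p0 by simp
    have "T j = ?r" using orbit_inj[OF assms(1) assms(3) assms(5), of "T j" ?r] Tle rp Tj sr by simp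
    moreover have "Fc h \<sigma> i s a = Fc h \<sigma> i ?r a"
      using Fc_mod[OF assms(3) assms(4) assms(8), of ?r "s div p"] unfolding e .
    ultimately show ?thesis by simp
  qed
  have yO: "y ! j = Fc h \<sigma> i (T j) a" if "j \<in> Orb" "j < l" for j using that by (simp add: y_def)
  have yN: "y ! j = x0 ! j" if "j \<notin> Orb" "j < l" for j using that by (simp add: y_def)
  have x0s: "set x0 \<subseteq> {1..k}" "length x0 = l" using assms(6) by (auto simp: points_def)
  have "y ! j \<in> {1..k}" if "j < l" for j
  proof (cases "j \<in> Orb")
    case True then show ?thesis using yO that Fc_in[OF assms(2) assms(8)] by simp
  next
    case False
    have "x0 ! j \<in> set x0" using nth_mem[of j x0] that x0s by simp
    then have "x0 ! j \<in> {1..k}" using x0s by blast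
    then show ?thesis using yN[OF False that] by simp
  qed
  note yin = this
  have ylen: "length y = l" by (simp add: y_def)
  have "set y \<subseteq> {1..k}"
  proof
    fix z assume "z \<in> set y"
    then obtain j where j: "j < length y" "y ! j = z" by (auto simp: in_set_conv_nth)
    then show "z \<in> {1..k}" using yin[of j] ylen by simp
  qed
  then have yp: "y \<in> points k l" using ylen by (simp add: points_def)
  have yfix: "wr_act h \<sigma> y = y"
  proof (rule wr_fix[OF yp])
    fix m assume m: "m < l"
    show "y ! (\<sigma> m) = h m (y ! m)"
    proof (cases "m \<in> Orb")
      case True
      then obtain s where s: "(\<sigma> ^^ s) i = m" unfolding Orb_def by blast
      have sm: "(\<sigma> ^^ Suc s) i = \<sigma> m" using s by simp
      then have "\<sigma> m \<in> Orb" unfolding Orb_def by blast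
      then have "y ! (\<sigma> m) = Fc h \<sigma> i (T (\<sigma> m)) a" using yO sig_lt m by blast
      also have "\<dots> = Fc h \<sigma> i (Suc s) a" using V[OF sm] by simp
      also have "\<dots> = h m (Fc h \<sigma> i s a)" using s by simp
      also have "\<dots> = h m (y ! m)" using yO[OF True m] V[OF s] by simp
      finally show ?thesis .
    next
      case False
      have "\<sigma> m \<notin> Orb"
      proof
        assume "\<sigma> m \<in> Orb"
        then obtain t where t: "(\<sigma> ^^ t) i = \<sigma> m" unfolding Orb_def by blast
        have "(\<sigma> ^^ (t + p)) i = (\<sigma> ^^ t) i" using assms(3) by (simp add: funpow_add)
        moreover have "t + p = Suc (t + p - 1)" using p0 by simp
        ultimately have "(\<sigma> ^^ Suc (t + p - 1)) i = \<sigma> m" using t by simp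
        then have "\<sigma> ((\<sigma> ^^ (t + p - 1)) i) = \<sigma> m" by simp
        then have "(\<sigma> ^^ (t + p - 1)) i = m" using permutes_inj[OF sp] by (simp add: inj_eq)
        then show False using False unfolding Orb_def by blast
      qed
      then show ?thesis using yN False m sig_lt wr_fixD[OF assms(6) assms(7) m] by simp
    qed
  qed
  have "(\<sigma> ^^ 0) i = i" by simp
  then have "i \<in> Orb" unfolding Orb_def by blast
  moreover have "T i = 0" unfolding T_def by simp
  ultimately have "y ! i = a" using yO assms(2) by simp
  then have "y \<noteq> x0" using assms(9) by auto
  then show ?thesis using yp yfix by blast
qed

lemma period:
  assumes "\<forall>x\<in>points k l. (wr_act h \<sigma> ^^ p) x = x" "i < l" "k \<ge> 2"
  shows "(\<sigma> ^^ p) i = i \<and> (\<forall>b\<in>{1..k}. Fc h \<sigma> i p b = b)"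
proof -
  have key: "xs ! ((\<sigma> ^^ p) i) = Fc h \<sigma> i p (xs ! i)" if "xs \<in> points k l" for xs
    using wr_pow_nth[OF that assms(2), of p] assms(1) that by simp
  have rp: "replicate l b \<in> points k l" if "b \<in> {1..k}" for b using that by (auto simp: points_def)
  have m: "(\<sigma> ^^ p) i < l" using sigpow_lt assms(2) by blast
  have F: "Fc h \<sigma> i p b = b" if "b \<in> {1..k}" for b using key[OF rp[OF that]] m assms(2) by simp
  moreover have "(\<sigma> ^^ p) i = i"
  proof (rule ccontr)
    assume ne: "(\<sigma> ^^ p) i \<noteq> i"
    let ?xs = "(replicate l 1)[(\<sigma> ^^ p) i := 2]"
    have "set ?xs \<subseteq> {1..k}" using assms(3) m
      by (auto simp: in_set_conv_nth nth_list_update)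
    then have "?xs \<in> points k l" by (simp add: points_def)
    from key[OF this] have "2 = Fc h \<sigma> i p 1" using m ne assms(2) by simp
    moreover have "Fc h \<sigma> i p 1 = 1" using F assms(3) by simp
    ultimately show False by simp
  qed
  ultimately show ?thesis by blast
qed

lemma wr_nilpotent: "\<exists>n>0. \<forall>x\<in>points k l. (wr_act h \<sigma> ^^ n) x = x"
proof -
  let ?g = "wr_act h \<sigma>"
  define g' where "g' x = (if x \<in> points k l then ?g x else x)" for x
  have fin: "finite (points k l)" by (rule points_fin)
  have inj: "inj_on ?g (points k l)"
  proof (rule inj_onI)
    fix xs ys assume xs: "xs \<in> points k l" and ys: "ys \<in> points k l" and e: "?g xs = ?g ys"
    have "xs ! m = ys ! m" if "m < l" for m
    proof -
      have "h m (xs ! m) = h m (ys ! m)" using wr_nth_sig[OF xs that] wr_nth_sig[OF ys that] e by simp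
      then show ?thesis using permutes_inj[OF hp[OF that]] by (simp add: inj_eq)
    qed
    then show "xs = ys" using xs ys by (auto simp: points_def intro: nth_equalityI)
  qed
  have sub: "?g ` points k l \<subseteq> points k l" using wr_points by blast
  have "?g ` points k l = points k l" using endo_inj_surj[OF fin sub inj] .
  then have "bij_betw ?g (points k l) (points k l)" using inj by (simp add: bij_betw_def)
  moreover have "\<And>a. a \<in> points k l \<Longrightarrow> g' a = ?g a" by (simp add: g'_def)
  moreover have "bij_betw g' (points k l) (points k l) = bij_betw ?g (points k l) (points k l)"
    by (rule bij_betw_cong) (simp add: g'_def)
  ultimately have "bij_betw g' (points k l) (points k l)" by simp
  then have "g' permutes points k l" by (rule bij_imp_permutes) (simp add: g'_def)
  then have "permutation g'" using fin permutes_imp_permutation by blast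
  then obtain n where n: "(g' ^^ n) = id" "n > 0" by (rule permutation_is_nilpotent)
  have eq: "(g' ^^ m) x = (?g ^^ m) x" if "x \<in> points k l" for m x
    using that by (induct m) (auto simp: g'_def wr_pow_points)
  have "(?g ^^ n) x = x" if "x \<in> points k l" for x using eq[OF that, of n] n(1) by simp
  then show ?thesis using n(2) by blast
qed

end

definition cyc :: "nat \<Rightarrow> nat \<Rightarrow> nat" where
  "cyc k x = (if 2 \<le> x \<and> x < k then x + 1 else if x = k \<and> 2 \<le> k then 2 else x)"

lemma cyc_pow:
  assumes "k \<ge> 3" "2 \<le> x" "x \<le> k"
  shows "(cyc k ^^ n) x = 2 + (x - 2 + n) mod (k - 1)"
proof (induct n)
  case 0 show ?case using assms by simp
next
  case (Suc n)
  define r where "r = (x - 2 + n) mod (k - 1)"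
  have r: "r < k - 1" using assms unfolding r_def by simp
  have m: "(x - 2 + Suc n) mod (k - 1) = (if Suc r = k - 1 then 0 else Suc r)"
    unfolding r_def by (metis add_Suc_right mod_Suc)
  have eq: "(cyc k ^^ Suc n) x = cyc k (2 + r)" using Suc r_def by simp
  have "cyc k (2 + r) = 2 + (if Suc r = k - 1 then 0 else Suc r)" using r assms by (auto simp: cyc_def)
  from trans[OF eq this] m show ?case by (simp only:)
qed

lemma cyc_val: "k \<ge> 3 \<Longrightarrow> x \<in> {1..k} \<Longrightarrow>
    cyc k x = (if x = 1 then 1 else if x = k then 2 else x + 1)"
  unfolding cyc_def by simp

lemma cyc_fix:
  assumes "k \<ge> 3" "x \<in> {1..k}" "cyc k x = x" shows "x = 1"
proof (rule ccontr)
  assume "x \<noteq> 1"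
  then show False using assms cyc_val[OF assms(1,2)] by (cases "x = k") simp_all
qed

lemma cyc_perm:
  assumes "k \<ge> 3" shows "cyc k permutes {1..k}"
proof -
  have inj: "inj_on (cyc k) {1..k}"
  proof (rule inj_onI)
    fix x y assume x: "x \<in> {1..k}" and y: "y \<in> {1..k}" and e: "cyc k x = cyc k y"
    have xv: "cyc k x = (if x = 1 then 1 else if x = k then 2 else x + 1)" by (rule cyc_val[OF assms x])
    have yv: "cyc k y = (if y = 1 then 1 else if y = k then 2 else y + 1)" by (rule cyc_val[OF assms y])
    show "x = y"
    proof (cases "x = 1 \<or> x = k")
      case True
      then show ?thesis using e xv yv x y assms by (cases "y = 1 \<or> y = k") auto
    next
      case False
      then show ?thesis using e xv yv x y assms by (cases "y = 1 \<or> y = k") auto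
    qed
  qed
  have sub: "cyc k ` {1..k} \<subseteq> {1..k}"
  proof
    fix z assume "z \<in> cyc k ` {1..k}"
    then obtain x where x: "x \<in> {1..k}" and z: "z = cyc k x" by blast
    show "z \<in> {1..k}" using cyc_val[OF assms x] x z assms by simp
  qed
  have "cyc k ` {1..k} = {1..k}" using endo_inj_surj[OF _ sub inj] by simp
  then have "bij_betw (cyc k) {1..k} {1..k}" using inj by (simp add: bij_betw_def)
  moreover have "cyc k x = x" if "x \<notin> {1..k}" for x
  proof -
    from that have "x = 0 \<or> k < x" by auto
    then show ?thesis unfolding cyc_def by auto
  qed
  ultimately show ?thesis by (rule bij_imp_permutes)
qed

lemma cyc_pow_fix:
  assumes "k \<ge> 3" "x \<in> {1..k}" "(k - 1) dvd n"
  shows "(cyc k ^^ n) x = x"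
proof (cases "x = 1")
  case True
  then show ?thesis by (intro fix_funpow) (simp add: cyc_def)
next
  case False
  then have x: "2 \<le> x" "x \<le> k" using assms(2) by auto
  obtain q where q: "n = (k - 1) * q" using assms(3) by blast
  have "(x - 2 + n) mod (k - 1) = (x - 2) mod (k - 1)" using q by simp
  also have "\<dots> = x - 2" using x assms(1) by simp
  finally have e: "(x - 2 + n) mod (k - 1) = x - 2" .
  have "(cyc k ^^ n) x = 2 + (x - 2 + n) mod (k - 1)" by (rule cyc_pow[OF assms(1) x])
  also have "\<dots> = x" using e x by simp
  finally show ?thesis .
qed

lemma cyc_pow_nfix:
  assumes "k \<ge> 3" "x \<in> {1..k}" "(cyc k ^^ n) x = x" "\<not> (k - 1) dvd n"
  shows "x = 1"
proof (rule ccontr)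
  assume "x \<noteq> 1"
  then have x: "2 \<le> x" "x \<le> k" using assms(2) by auto
  have "(cyc k ^^ n) x = 2 + (x - 2 + n) mod (k - 1)" by (rule cyc_pow[OF assms(1) x])
  then have "2 + (x - 2 + n) mod (k - 1) = x" using assms(3) by linarith
  then have "(x - 2 + n) mod (k - 1) = x - 2" by linarith
  moreover have "x - 2 < k - 1" using x assms(1) by simp
  ultimately have "(k - 1) dvd n" using mod_dvd_aux by blast
  then show False using assms(4) by simp
qed

theorem theorem5p1:
  fixes k l :: nat
  assumes "k \<ge> 3" and "l \<ge> 2"
  shows "(\<exists>g\<in>wreath_prod k l. quasi_semiregular (points k l) g) \<and>
         (\<forall>g\<in>wreath_prod k l.
            quasi_semiregular (points k l) g \<and> prime (perm_order (points k l) g) \<longrightarrow>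
            (\<exists>h. in_base_group k l g h \<and>
                 (\<forall>i<l. quasi_semiregular {1..k} (h i))))"
proof
  let ?P = "points k l"
  show "\<exists>g\<in>wreath_prod k l. quasi_semiregular ?P g"
  proof -
    let ?c = "cyc k"
    let ?g = "wr_act (\<lambda>_. ?c) id"
    have cp: "\<And>i. i < l \<Longrightarrow> (\<lambda>_. ?c) i permutes {1..k}" using cyc_perm assms(1) by simp
    have ip: "id permutes {0..<l}" by (rule permutes_id)
    have gin: "?g \<in> wreath_prod k l" unfolding wreath_prod_def using cp ip by blast
    have pw: "(?g ^^ n) xs ! i = (?c ^^ n) (xs ! i)" if "xs \<in> ?P" "i < l" for xs n i
      using wr_pow_nth[OF cp ip that, where n=n] Fc_id by simp
    have plen: "length ((?g ^^ n) xs) = l" if "xs \<in> ?P" for xs n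
      using wr_pow_points[OF cp ip that] by (simp add: points_def)
    have c1: "(?c ^^ n) 1 = 1" for n by (rule fix_funpow) (simp add: cyc_def)
    define one where "one = replicate l (1::nat)"
    have onep: "one \<in> ?P" unfolding one_def points_def using assms by auto
    have onefix: "(?g ^^ n) one = one" for n
    proof (rule nth_equalityI)
      show "length ((?g ^^ n) one) = length one" using plen[OF onep] by (simp add: one_def)
      fix i assume "i < length ((?g ^^ n) one)"
      then have i: "i < l" using plen[OF onep] by simp
      show "(?g ^^ n) one ! i = one ! i" using pw[OF onep i] c1 i by (simp add: one_def)
    qed
    have allin: "xs ! i \<in> {1..k}" if "xs \<in> ?P" "i < l" for xs i
    proof -
      have "xs ! i \<in> set xs" using that by (simp add: points_def)
      moreover have "set xs \<subseteq> {1..k}" using that by (simp add: points_def)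
      ultimately show ?thesis by blast
    qed
    have only: "y = one" if y: "y \<in> ?P" and yi: "\<And>i. i < l \<Longrightarrow> y ! i = 1" for y
    proof (rule nth_equalityI)
      show "length y = length one" using y by (simp add: points_def one_def)
      fix i assume "i < length y"
      then have i: "i < l" using y by (simp add: points_def)
      show "y ! i = one ! i" using yi[OF i] i by (simp add: one_def)
    qed
    have "quasi_semiregular ?P ?g"
      unfolding quasi_semiregular_def
    proof (intro conjI ballI allI impI)
      show "\<exists>!x. x \<in> ?P \<and> (\<forall>n. (?g ^^ n) x = x)"
      proof (rule ex1I[of _ one])
        show "one \<in> ?P \<and> (\<forall>n. (?g ^^ n) one = one)" using onep onefix by simp
        fix y assume y: "y \<in> ?P \<and> (\<forall>n. (?g ^^ n) y = y)"
        show "y = one"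
        proof (rule only)
          show "y \<in> ?P" using y by simp
          fix i assume i: "i < l"
          have y1: "(?g ^^ 1) y = y" using y by blast
          have "(?c ^^ 1) (y ! i) = y ! i" using pw[where xs=y and n=1 and i=i] y y1 i by simp
          then show "y ! i = 1" using cyc_fix[OF assms(1) allin[OF _ i]] y by simp
        qed
      qed
      fix y n assume y: "y \<in> ?P" and yn: "(?g ^^ n) y = y"
      show "(\<forall>x\<in>?P. (?g ^^ n) x = x) \<or> (\<forall>m. (?g ^^ m) y = y)"
      proof (cases "(k - 1) dvd n")
        case True
        have "(?g ^^ n) x = x" if x: "x \<in> ?P" for x
        proof (rule nth_equalityI)
          show "length ((?g ^^ n) x) = length x" using plen[OF x] x by (simp add: points_def)
          fix i assume "i < length ((?g ^^ n) x)"
          then have i: "i < l" using plen[OF x] by simp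
          show "(?g ^^ n) x ! i = x ! i" using pw[OF x i] cyc_pow_fix[OF assms(1) allin[OF x i] True] by simp
        qed
        then show ?thesis by blast
      next
        case False
        have "y = one"
        proof (rule only[OF y])
          fix i assume i: "i < l"
          have "(?c ^^ n) (y ! i) = y ! i" using pw[OF y i, where n=n] yn by simp
          then show "y ! i = 1" using cyc_pow_nfix[OF assms(1) allin[OF y i] _ False] by simp
        qed
        then show ?thesis using onefix by simp
      qed
    qed
    then show ?thesis using gin by blast
  qed
next
  let ?P = "points k l"
  show "\<forall>g\<in>wreath_prod k l.
            quasi_semiregular ?P g \<and> prime (perm_order ?P g) \<longrightarrow>
            (\<exists>h. in_base_group k l g h \<and> (\<forall>i<l. quasi_semiregular {1..k} (h i)))"
  proof (intro ballI impI)
    fix g assume gw: "g \<in> wreath_prod k l" and qp: "quasi_semiregular ?P g \<and> prime (perm_order ?P g)"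
    from gw obtain h \<sigma> where g: "g = wr_act h \<sigma>" and hp: "\<forall>i<l. h i permutes {1..k}"
      and sp: "\<sigma> permutes {0..<l}" unfolding wreath_prod_def by blast
    have hp': "\<And>i. i < l \<Longrightarrow> h i permutes {1..k}" using hp by blast
    define p where "p = perm_order ?P g"
    have pp: "prime p" using qp p_def by simp
    have pord: "\<forall>x\<in>?P. (g ^^ p) x = x"
      using perm_order_prop[OF wr_nilpotent[OF hp' sp]] g p_def by simp
    obtain x0 where x0: "x0 \<in> ?P" "\<forall>n. (g ^^ n) x0 = x0"
      using qp unfolding quasi_semiregular_def by blast
    have U: "y = x0" if "y \<in> ?P" "g y = y" for y
      by (rule qsr_unique[OF qp[THEN conjunct1] qp[THEN conjunct2] x0(1) x0(2) that])
    have gx0: "wr_act h \<sigma> x0 = x0" using x0(2)[rule_format, of 1] g by simp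
    have k2: "k \<ge> 2" using assms by simp
    have sid: "\<forall>i<l. \<sigma> i = i"
    proof (rule ccontr)
      assume "\<not> (\<forall>i<l. \<sigma> i = i)"
      then obtain i where i: "i < l" "\<sigma> i \<noteq> i" by blast
      have per: "(\<sigma> ^^ p) i = i \<and> (\<forall>b\<in>{1..k}. Fc h \<sigma> i p b = b)"
        using period[OF hp' sp _ i(1) k2] pord g by simp
      define a where "a = (if x0 ! i = 1 then 2 else (1::nat))"
      have a: "a \<in> {1..k}" "a \<noteq> x0 ! i" using k2 by (auto simp: a_def)
      obtain y where yy: "y \<in> ?P" "wr_act h \<sigma> y = y" "y \<noteq> x0"
        using second_fix[OF hp' sp pp i(1) per[THEN conjunct1] per[THEN conjunct2] i(2) x0(1) gx0 a]
        by blast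
      have "g y = y" using yy(2) g by simp
      from U[OF yy(1) this] yy(3) show False by simp
    qed
    have sig: "\<sigma> = id"
    proof
      fix x show "\<sigma> x = id x"
      proof (cases "x < l")
        case True then show ?thesis using sid by simp
      next
        case False then show ?thesis using permutes_not_in[OF sp] by simp
      qed
    qed
    have x0len: "length x0 = l" and x0set: "set x0 \<subseteq> {1..k}" using x0(1) by (auto simp: points_def)
    show "\<exists>h. in_base_group k l g h \<and> (\<forall>i<l. quasi_semiregular {1..k} (h i))"
    proof (intro exI conjI allI impI)
      show "in_base_group k l g h" unfolding in_base_group_def using hp g sig by simp
      fix i assume i: "i < l"
      have "x0 ! i \<in> set x0" using x0len i nth_mem[of i x0] by simp
      then have x0i: "x0 ! i \<in> {1..k}" using x0set by blast
      have hfix: "h i (x0 ! i) = x0 ! i" using wr_fixD[OF hp' sp x0(1) gx0 i] sig by simp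
      have huniq: "b = x0 ! i" if b: "b \<in> {1..k}" "h i b = b" for b
      proof -
        let ?y = "x0[i := b]"
        have "set ?y \<subseteq> {1..k}" using x0set b set_update_subset_insert[of x0 i b] by blast
        then have yp: "?y \<in> ?P" using x0len by (simp add: points_def)
        have "wr_act h \<sigma> ?y = ?y"
        proof (rule wr_fix[OF hp' sp yp])
          fix m assume m: "m < l"
          show "?y ! (\<sigma> m) = h m (?y ! m)"
          proof (cases "m = i")
            case True then show ?thesis using b i x0len sig by simp
          next
            case False then show ?thesis using wr_fixD[OF hp' sp x0(1) gx0 m] sig by simp
          qed
        qed
        then have "g ?y = ?y" using g by simp
        then have "?y = x0" by (rule U[OF yp])
        moreover have "?y ! i = b" using i x0len by simp
        ultimately show ?thesis by simp
      qed
      have hper: "(h i ^^ p) b = b" if "b \<in> {1..k}" for b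
      proof -
        have "\<forall>b\<in>{1..k}. Fc h \<sigma> i p b = b" using period[OF hp' sp _ i k2] pord g by simp
        then show ?thesis using that sig Fc_id by simp
      qed
      show "quasi_semiregular {1..k} (h i)"
        unfolding quasi_semiregular_def
      proof (intro conjI ballI allI impI)
        show "\<exists>!x. x \<in> {1..k} \<and> (\<forall>n. (h i ^^ n) x = x)"
        proof (rule ex1I[of _ "x0 ! i"])
          show "x0 ! i \<in> {1..k} \<and> (\<forall>n. (h i ^^ n) (x0 ! i) = x0 ! i)"
            using x0i fix_funpow[of "h i", OF hfix] by blast
          fix y assume y: "y \<in> {1..k} \<and> (\<forall>n. (h i ^^ n) y = y)"
          then have "(h i ^^ 1) y = y" by blast
          then show "y = x0 ! i" using huniq y by simp
        qed
        fix y n assume y: "y \<in> {1..k}" and yn: "(h i ^^ n) y = y"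
        show "(\<forall>x\<in>{1..k}. (h i ^^ n) x = x) \<or> (\<forall>m. (h i ^^ m) y = y)"
        proof (cases "p dvd n")
          case True
          then obtain q where q: "n = p * q" by blast
          have "\<forall>x\<in>{1..k}. (h i ^^ n) x = x"
          proof
            fix x assume "x \<in> {1..k}"
            from fix_mult[OF hper[OF this], of q] show "(h i ^^ n) x = x" using q by simp
          qed
          then show ?thesis ..
        next
          case False
          have "h i y = y" using bez_fix[OF pp hper[OF y] yn False] .
          then have "y = x0 ! i" using huniq y by blast
          then show ?thesis using fix_funpow[of "h i", OF hfix] by auto
        qed
      qed
    qed
  qed
qed

end
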